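(* Let $q$ be a prime power and let $l_1,l_2$ be distinct odd primes, each coprime to $q$. If every irreducible monic factor of $x^{l_1}-1$ and of $x^{l_2}-1$ in $\mathbb{F}_{q^2}[x]$ is SCRIM and $\gcd(\mathrm{ord}_{l_1}(q^2),\mathrm{ord}_{l_2}(q^2))=1$, then $|\Omega_{q^2,l_1l_2}|=|\Omega_{q^2,l_1}|\,|\Omega_{q^2,l_2}|$.
   Context: $\mathbb{F}_{q^2}$ is the finite field with $q^2$ elements. For $\alpha\in\mathbb{F}_{q^2}$ put $\bar\alpha=\alpha^q$, and for $f(x)=\sum_i f_ix^i$ put $\overline{f(x)}=\sum_i \bar f_i x^i$. For $f(x)$ with $f(0)\neq 0$, $f^*(x)=x^{\deg f}f(0)^{-1}f(1/x)$ and $f^\dagger(x)=\overline{f^*(x)}$. A polynomial is SCRIM if it is monic, irreducible over $\mathbb{F}_{q^2}$, has nonzero constant term, and satisfies $f=f^\dagger$. $\Omega_{q^2,n}$ denotes the set of SCRIM polynomials in $\mathbb{F}_{q^2}[x]$ dividing $x^n-1$. $\mathrm{ord}_l(a)$ is the multiplicative order of $a$ modulo $l$. *)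

theory Defs
  imports "HOL-Computational_Algebra.Computational_Algebra" "HOL-Number_Theory.Pocklington"
begin

definition conj_poly :: "nat \<Rightarrow> 'a::field poly \<Rightarrow> 'a poly" where
  "conj_poly q f = map_poly (\<lambda>a. a ^ q) f"

text \<open>f^*(x) = x^(deg f) f(0)^(-1) f(1/x); reflect_poly f = x^(deg f) f(1/x).\<close>
definition recip_poly :: "'a::field poly \<Rightarrow> 'a poly" where
  "recip_poly f = Polynomial.smult (inverse (Polynomial.coeff f 0)) (reflect_poly f)"

definition dagger_poly :: "nat \<Rightarrow> 'a::field poly \<Rightarrow> 'a poly" where
  "dagger_poly q f = conj_poly q (recip_poly f)"

definition SCRIM :: "nat \<Rightarrow> 'a::field poly \<Rightarrow> bool" where
  "SCRIM q f \<longleftrightarrow> lead_coeff f = 1 \<and> irreducible f \<and> Polynomial.coeff f 0 \<noteq> 0 \<and> f = dagger_poly q f"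

definition Omega :: "nat \<Rightarrow> nat \<Rightarrow> 'a::field poly set" where
  "Omega q n = {f. SCRIM q f \<and> f dvd ([:0, 1:] ^ n - 1)}"

end

theory Submission
  imports Defs "HOL-Algebra.Algebraic_Closure_Type" "HOL-Library.Cardinality"
begin
hide_const (open) Divisibility.irreducible Divisibility.prime Polynomials.degree Polynomials.lead_coeff up_ring.coeff UnivPoly.monom

lemma map_poly_to_ac_add: "map_poly to_ac (p + r) = map_poly to_ac p + map_poly to_ac r"
  by (rule poly_eqI) (simp add: coeff_map_poly)
lemma map_poly_to_ac_diff: "map_poly to_ac (p - r) = map_poly to_ac p - map_poly to_ac r"
  by (rule poly_eqI) (simp add: coeff_map_poly)
lemma map_poly_to_ac_mult: "map_poly to_ac (p * r) = map_poly to_ac p * map_poly to_ac r"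
  by (rule poly_eqI) (simp add: coeff_map_poly coeff_mult to_ac_sum)
lemma map_poly_to_ac_power: "map_poly to_ac (p ^ n) = map_poly to_ac p ^ n"
  by (induction n) (simp_all add: map_poly_to_ac_mult)
lemma map_poly_to_ac_x: "map_poly to_ac [:0, 1:] = [:0, 1:]"
  by (simp add: map_poly_pCons)
lemma map_poly_to_ac_prod_mset: "map_poly to_ac (prod_mset M) = prod_mset (image_mset (map_poly to_ac) M)"
  by (induction M) (simp_all add: map_poly_to_ac_mult)

lemma poly_frob:
  fixes P :: "'b::idom poly"
  assumes "prime CHAR('b)" "m = CHAR('b) ^ k"
  shows "poly (map_poly (\<lambda>c. c ^ m) P) (y ^ m) = (poly P y) ^ m"
proof -
  have m0: "m > 0" using assms prime_gt_0_nat by auto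
  have deg: "degree (map_poly (\<lambda>c. c ^ m) P) = degree P"
    by (rule degree_map_poly) (use m0 in auto)
  have "(poly P y) ^ m = (\<Sum>i\<le>degree P. (poly.coeff P i * y ^ i) ^ m)"
    unfolding poly_altdef by (rule freshmans_dream_sum'[OF assms])
  also have "\<dots> = (\<Sum>i\<le>degree P. poly.coeff P i ^ m * (y ^ m) ^ i)"
    by (simp add: power_mult_distrib flip: power_mult) (simp add: mult.commute)
  also have "\<dots> = poly (map_poly (\<lambda>c. c ^ m) P) (y ^ m)"
    unfolding poly_altdef deg using m0 by (simp add: coeff_map_poly)
  finally show ?thesis ..
qed

lemma frob_inj:
  fixes y z :: "'b::idom"
  assumes "prime CHAR('b)" "m = CHAR('b) ^ k" "y ^ m = z ^ m"
  shows "y = z"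
proof -
  have m0: "m > 0" using assms prime_gt_0_nat by auto
  have "y ^ m = (y - z) ^ m + z ^ m"
    using freshmans_dream'[OF assms(1,2), of "y - z" z] by simp
  then have "(y - z) ^ m = 0" using assms(3) by simp
  then show ?thesis using m0 by simp
qed

lemma finite_field_pow_card:
  fixes x :: "'a :: {field, finite}"
  shows "x ^ card (UNIV :: 'a set) = x"
proof (cases "x = 0")
  case False
  have "x * (\<Prod>y\<in>UNIV-{0}. x * y) = x * x ^ (card (UNIV :: 'a set) - 1) * \<Prod>(UNIV-{0})"
    by (simp add: prod.distrib mult_ac)
  also have "x * x ^ (card (UNIV :: 'a set) - 1) = x ^ Suc (card (UNIV :: 'a set) - 1)"
    by (subst power_Suc) auto
  also have "Suc (card (UNIV :: 'a set) - 1) = card (UNIV :: 'a set)"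
    using finite_UNIV_card_ge_0[where ?'a = 'a] by simp
  also have "(\<Prod>y\<in>UNIV-{0}. x * y) = (\<Prod>y\<in>UNIV-{0}. y)"
    by (rule prod.reindex_bij_witness[of _ "\<lambda>y. y / x" "\<lambda>y. x * y"]) (use False in auto)
  finally show ?thesis
    by simp
qed (use finite_UNIV_card_ge_0[where ?'a = 'a] in auto)

lemma prime_CHAR_finite: "prime CHAR('a :: {field, finite})"
  by (rule prime_CHAR_semidom) (rule finite_imp_CHAR_pos, simp)

lemma CARD_ge2: "card (UNIV::'a::{field,finite} set) \<ge> 2"
proof -
  have "{0::'a, 1} \<subseteq> UNIV" by simp
  then have "card {0::'a, 1} \<le> CARD('a)" by (rule card_mono[rotated]) simp
  then show ?thesis by simp
qed

lemma to_ac_pow_card: "to_ac (a::'a::{field,finite}) ^ CARD('a) = to_ac a"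
  by (metis to_ac_power finite_field_pow_card)

lemma fix_to_ac:
  assumes hQ: "card (UNIV::'a::{field,finite} set) = CHAR('a) ^ r"
  shows "((y::'a alg_closure) ^ CARD('a) = y) \<longleftrightarrow> y \<in> range to_ac"
proof
  assume "y \<in> range to_ac" then show "y ^ CARD('a) = y" using to_ac_pow_card by auto
next
  assume y: "y ^ CARD('a) = y"
  define P :: "'a alg_closure poly" where "P = monom 1 CARD('a) + [:0, -1:]"
  have Q2: "CARD('a) \<ge> 2" by (rule CARD_ge2)
  have degP: "degree P = CARD('a)"
    unfolding P_def using Q2 by (subst degree_add_eq_left) (auto simp: degree_monom_eq)
  have P0: "P \<noteq> 0" using degP Q2 by auto
  have rootsP: "{x. poly P x = 0} = {x. x ^ CARD('a) = x}"
    unfolding P_def by (auto simp: poly_monom)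
  have fin: "finite {x. poly P x = 0}" by (rule poly_roots_finite[OF P0])
  have cardP: "card {x. poly P x = 0} \<le> CARD('a)"
    using card_poly_roots_bound[OF P0] degP by simp
  have sub: "range to_ac \<subseteq> {x. poly P x = 0}"
    unfolding rootsP using to_ac_pow_card by auto
  have cr: "card (range (to_ac :: 'a \<Rightarrow> 'a alg_closure)) = CARD('a)"
    by (rule card_image[OF inj_to_ac])
  have "range to_ac = {x. poly P x = 0}"
    by (rule card_subset_eq[OF fin sub]) (use cardP cr card_mono[OF fin sub] in linarith)
  then show "y \<in> range to_ac" using y rootsP by auto
qed

lemma CHAR_ac_prime: "prime CHAR('a::{field,finite} alg_closure)"
  using prime_CHAR_finite by simp

lemma frob_poly_F:
  assumes hQ: "card (UNIV::'a::{field,finite} set) = CHAR('a) ^ r"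
  shows "poly (map_poly to_ac (f::'a poly)) (y ^ CARD('a)) = (poly (map_poly to_ac f) y) ^ CARD('a)"
proof -
  have "poly (map_poly (\<lambda>c. c ^ CARD('a)) (map_poly to_ac f)) (y ^ CARD('a)) = (poly (map_poly to_ac f) y) ^ CARD('a)"
    by (rule poly_frob[OF CHAR_ac_prime]) (simp add: hQ finite_UNIV_card_ge_0)
  moreover have "map_poly (\<lambda>c. c ^ CARD('a)) (map_poly to_ac f) = map_poly to_ac f"
    by (subst map_poly_map_poly) (auto simp: o_def to_ac_pow_card)
  ultimately show ?thesis by simp
qed

lemma frob_poly_F_iter:
  assumes hQ: "card (UNIV::'a::{field,finite} set) = CHAR('a) ^ r"
  shows "poly (map_poly to_ac (f::'a poly)) (y ^ (CARD('a) ^ j)) = (poly (map_poly to_ac f) y) ^ (CARD('a) ^ j)"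
proof (induction j)
  case 0 then show ?case by simp
next
  case (Suc j)
  have "y ^ (CARD('a) ^ Suc j) = (y ^ (CARD('a) ^ j)) ^ CARD('a)"
    by (metis power_mult mult.commute power_Suc)
  then have "poly (map_poly to_ac f) (y ^ (CARD('a) ^ Suc j)) = (poly (map_poly to_ac f) y ^ (CARD('a) ^ j)) ^ CARD('a)"
    using frob_poly_F[OF hQ] Suc by simp
  then show ?case by (metis power_mult mult.commute power_Suc)
qed

lemma descent:
  assumes hQ: "card (UNIV::'a::{field,finite} set) = CHAR('a) ^ r"
    and finO: "finite (Ob :: 'a alg_closure set)"
    and clos: "(\<lambda>y. y ^ CARD('a)) ` Ob \<subseteq> Ob"
  shows "\<exists>g0 :: 'a poly. lead_coeff g0 = 1 \<and> {y. poly (map_poly to_ac g0) y = 0} = Ob"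
proof -
  let ?Q = "CARD('a)"
  have Q0: "?Q > 0" by (simp add: finite_UNIV_card_ge_0)
  have surj: "(\<lambda>y. y ^ ?Q) ` Ob = Ob"
  proof (rule endo_inj_surj[OF finO clos])
    show "inj_on (\<lambda>y. y ^ ?Q) Ob"
      by (rule inj_onI, rule frob_inj[OF CHAR_ac_prime]) (use hQ in auto)
  qed
  define g :: "'a alg_closure poly" where "g = (\<Prod>w\<in>Ob. [:-w, 1:])"
  have polyg: "poly g y = (\<Prod>w\<in>Ob. y - w)" for y
    unfolding g_def by (simp add: poly_prod)
  have rootsg: "poly g y = 0 \<longleftrightarrow> y \<in> Ob" for y
    unfolding polyg using finO by (simp add: prod_zero_iff)
  have degg: "degree g = card Ob"
    unfolding g_def by (subst degree_prod_sum_eq) auto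
  have leadg: "lead_coeff g = 1"
    unfolding g_def by (simp add: lead_coeff_prod)
  define gp where "gp = map_poly (\<lambda>c. c ^ ?Q) g"
  have deggp: "degree gp = card Ob"
    unfolding gp_def using degg by (subst degree_map_poly) auto
  have leadgp: "lead_coeff gp = 1"
    unfolding gp_def using leadg by (subst degree_map_poly) (auto simp: coeff_map_poly)
  have rootsgp: "poly gp y = 0" if "y \<in> Ob" for y
  proof -
    obtain w where w: "w \<in> Ob" "y = w ^ ?Q" using surj \<open>y \<in> Ob\<close> by blast
    have "poly gp y = (poly g w) ^ ?Q"
      unfolding gp_def w(2) by (rule poly_frob[OF CHAR_ac_prime]) (simp add: hQ)
    then show ?thesis using rootsg w(1) by simp
  qed
  have gpg: "gp = g"
  proof (rule ccontr)
    assume ne: "gp \<noteq> g"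
    define d where "d = gp - g"
    have d0: "d \<noteq> 0" using ne unfolding d_def by simp
    have "degree d \<le> card Ob" unfolding d_def using degg deggp degree_diff_le[of gp "card Ob" g] by simp
    moreover have "poly.coeff d (card Ob) = 0"
      unfolding d_def using leadg leadgp degg deggp by simp
    ultimately have "degree d < card Ob"
      using d0 by (metis le_neq_implies_less leading_coeff_0_iff)
    moreover have "Ob \<subseteq> {y. poly d y = 0}"
      unfolding d_def using rootsgp rootsg by auto
    then have "card Ob \<le> card {y. poly d y = 0}"
      by (rule card_mono[OF poly_roots_finite[OF d0]])
    ultimately show False using card_poly_roots_bound[OF d0] by linarith
  qed
  have coeffs: "poly.coeff g i \<in> range to_ac" for i
  proof -
    have "poly.coeff gp i = poly.coeff g i" using gpg by simp
    then have "poly.coeff g i ^ ?Q = poly.coeff g i" unfolding gp_def by (simp add: coeff_map_poly)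
    then show ?thesis using fix_to_ac[OF hQ] by blast
  qed
  define g0 where "g0 = map_poly of_ac g"
  have gg0: "map_poly to_ac g0 = g"
    unfolding g0_def by (rule poly_eqI) (simp add: coeff_map_poly to_ac_of_ac[OF coeffs])
  have "degree g0 = degree g"
    using gg0 degree_map_poly[of to_ac g0] by simp
  then have "lead_coeff g0 = 1" unfolding g0_def using leadg by (simp add: coeff_map_poly)
  moreover have "{y. poly (map_poly to_ac g0) y = 0} = Ob" using gg0 rootsg by auto
  ultimately show ?thesis by blast
qed

definition Zr :: "'a::field poly \<Rightarrow> 'a alg_closure set" where
  "Zr f = {y. poly (map_poly to_ac f) y = 0}"

definition forb :: "nat \<Rightarrow> 'b::power \<Rightarrow> 'b set" where
  "forb Q z = range (\<lambda>j. z ^ (Q ^ j))"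

definition Aset :: "nat \<Rightarrow> 'a::field poly set" where
  "Aset m = {f. lead_coeff f = 1 \<and> irreducible f \<and> f dvd ([:0, 1:] ^ m - 1)}"

definition urt :: "nat \<Rightarrow> 'b::field set" where
  "urt m = {y. y ^ m = 1}"

lemma Zr_mult: "Zr (f * g) = Zr f \<union> Zr g"
  unfolding Zr_def by (auto simp: map_poly_to_ac_mult)

lemma Zr_dvd: "f dvd g \<Longrightarrow> Zr f \<subseteq> Zr g"
  by (auto elim!: dvdE simp: Zr_mult)

lemma Zr_xm1: "Zr ([:0, 1:] ^ m - 1 :: 'a::field poly) = urt m"
  unfolding Zr_def urt_def
  by (simp add: map_poly_to_ac_diff map_poly_to_ac_power map_poly_to_ac_x)

lemma Zr_const: "c \<noteq> 0 \<Longrightarrow> Zr [:c:] = {}"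
  unfolding Zr_def by (simp add: map_poly_pCons)

lemma Zr_unit: "is_unit (r :: 'a::field poly) \<Longrightarrow> Zr r = {}"
proof -
  assume "is_unit r"
  then obtain c where c: "r = [:c:]" "c dvd 1" by (auto simp: is_unit_poly_iff)
  then have "c \<noteq> 0" by auto
  then show ?thesis using c Zr_const by simp
qed

lemma Zr_divmod:
  fixes f r :: "'a::field poly"
  assumes "y \<in> Zr f" "y \<in> Zr r"
  shows "y \<in> Zr (f mod r)"
proof -
  have "f = f div r * r + f mod r" by simp
  then have "map_poly to_ac f = map_poly to_ac (f div r) * map_poly to_ac r + map_poly to_ac (f mod r)"
    by (metis map_poly_to_ac_add map_poly_to_ac_mult)
  then have "poly (map_poly to_ac f) y = poly (map_poly to_ac (f div r)) y * poly (map_poly to_ac r) y + poly (map_poly to_ac (f mod r)) y"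
    by simp
  then show ?thesis using assms unfolding Zr_def by simp
qed

lemma no_small_common_root:
  fixes f :: "'a::field poly"
  assumes irr: "irreducible f" and yf: "y \<in> Zr f"
  shows "r \<noteq> 0 \<Longrightarrow> degree r < degree f \<Longrightarrow> y \<notin> Zr r"
proof (induction "degree r" arbitrary: r rule: less_induct)
  case less
  show ?case
  proof
    assume yr: "y \<in> Zr r"
    have ys: "y \<in> Zr (f mod r)" by (rule Zr_divmod[OF yf yr])
    show False
    proof (cases "f mod r = 0")
      case True
      then have "r dvd f" by (simp add: mod_eq_0_iff_dvd)
      then have "f dvd r \<or> is_unit r" by (rule irreducibleD'[OF irr])
      then show False
      proof
        assume "f dvd r"
        then have "degree f \<le> degree r" using less.prems(1) by (rule dvd_imp_degree_le)
        then show False using less.prems(2) by simp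
      next
        assume "is_unit r" then show False using yr Zr_unit by blast
      qed
    next
      case False
      have "degree (f mod r) < degree r" by (rule degree_mod_less'[OF less.prems(1) False])
      then have "y \<notin> Zr (f mod r)" using less.hyps[of "f mod r"] False less.prems(2) by simp
      then show False using ys by simp
    qed
  qed
qed

lemma common_root_dvd:
  fixes f g :: "'a::field poly"
  assumes irr: "irreducible f" and y: "y \<in> Zr f" "y \<in> Zr g"
  shows "f dvd g"
proof (rule ccontr)
  assume nd: "\<not> f dvd g"
  then have r0: "g mod f \<noteq> 0" by (simp add: mod_eq_0_iff_dvd)
  have f0: "f \<noteq> 0" using irr by auto
  have "degree (g mod f) < degree f" by (rule degree_mod_less'[OF f0 r0])
  then have "y \<notin> Zr (g mod f)" using no_small_common_root[OF irr y(1) r0] by simp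
  then show False using Zr_divmod[OF y(2) y(1)] by simp
qed

lemma Zr_nonempty:
  fixes f :: "'a::field poly"
  assumes "degree f > 0"
  shows "\<exists>y. y \<in> Zr f"
proof -
  have "degree (map_poly to_ac f) > 0" using assms by (subst degree_map_poly) auto
  then show ?thesis unfolding Zr_def using alg_closed_imp_poly_has_root by blast
qed

lemma irreducible_degree_pos: "irreducible (f :: 'a::field poly) \<Longrightarrow> degree f > 0"
proof -
  assume irr: "irreducible f"
  have "f \<noteq> 0" using irr by auto
  moreover have "\<not> is_unit f" using irr by (rule irreducible_not_unit)
  ultimately show ?thesis using is_unit_iff_degree[of f] by auto
qed

lemma finite_urt: "m > 0 \<Longrightarrow> finite (urt m :: 'b::field set)"
proof -
  assume m: "m > 0"
  define P :: "'b poly" where "P = monom 1 m + [:-1:]"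
  have "degree P = m" unfolding P_def using m by (subst degree_add_eq_left) (auto simp: degree_monom_eq)
  then have "P \<noteq> 0" using m by auto
  moreover have "urt m = {x. poly P x = 0}" unfolding P_def urt_def by (auto simp: poly_monom)
  ultimately show ?thesis using poly_roots_finite by simp
qed

lemma forb_sub_urt: "z \<in> urt m \<Longrightarrow> forb Q z \<subseteq> urt (m::nat)"
proof
  fix y assume z: "z \<in> urt m" and "y \<in> forb Q z"
  then obtain j where y: "y = z ^ (Q ^ j)" unfolding forb_def by blast
  have "y ^ m = z ^ (Q ^ j * m)" unfolding y by (rule power_mult[symmetric])
  also have "\<dots> = (z ^ m) ^ (Q ^ j)" by (simp add: power_mult[symmetric] mult.commute)
  finally show "y \<in> urt m" using z unfolding urt_def by simp
qed

lemma forb_self: "z \<in> forb Q (z::'b::monoid_mult)"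
proof -
  have "z = z ^ (Q ^ 0)" by simp
  then show ?thesis unfolding forb_def by (rule range_eqI)
qed

lemma forb_iter: "y \<in> forb Q z \<Longrightarrow> y ^ (Q ^ j) \<in> forb Q (z::'b::monoid_mult)"
proof -
  assume "y \<in> forb Q z"
  then obtain i where y: "y = z ^ (Q ^ i)" unfolding forb_def by blast
  have "y ^ (Q ^ j) = z ^ (Q ^ i * Q ^ j)" unfolding y by (rule power_mult[symmetric])
  also have "\<dots> = z ^ (Q ^ (i + j))" by (simp add: power_add)
  finally show ?thesis unfolding forb_def by (rule range_eqI)
qed

lemma forb_frob: "y \<in> forb Q z \<Longrightarrow> y ^ Q \<in> forb Q (z::'b::monoid_mult)"
  using forb_iter[of y Q z 1] by simp

lemma Zr_is_orbit:
  assumes hQ: "CARD('a::{field,finite}) = CHAR('a) ^ r"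
    and irr: "irreducible (f :: 'a poly)" and z: "z \<in> Zr f" and zm: "z \<in> urt m" and m: "m > 0"
  shows "Zr f = forb CARD('a) z"
proof
  show "forb CARD('a) z \<subseteq> Zr f"
    using z frob_poly_F_iter[OF hQ, of f z] unfolding forb_def Zr_def by auto
next
  have fin: "finite (forb CARD('a) z)"
    using finite_subset[OF forb_sub_urt[OF zm] finite_urt[OF m]] .
  obtain g0 :: "'a poly" where g0: "lead_coeff g0 = 1" "Zr g0 = forb CARD('a) z"
    using descent[OF hQ fin] forb_frob unfolding Zr_def by blast
  have "z \<in> Zr g0" using g0 forb_self by auto
  then have "f dvd g0" using common_root_dvd[OF irr z] by blast
  then show "Zr f \<subseteq> forb CARD('a) z" using Zr_dvd g0 by blast
qed

lemma root_has_factor: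
  fixes P :: "'a::field poly"
  shows "P \<noteq> 0 \<Longrightarrow> z \<in> Zr P \<Longrightarrow> \<exists>f. lead_coeff f = 1 \<and> irreducible f \<and> f dvd P \<and> z \<in> Zr f"
proof (induction "degree P" arbitrary: P rule: less_induct)
  case less
  have nu: "\<not> is_unit P" using less.prems Zr_unit by blast
  show ?case
  proof (cases "irreducible P")
    case True
    define f where "f = [:inverse (lead_coeff P):] * P"
    have lc0: "lead_coeff P \<noteq> 0" using less.prems by simp
    have u: "is_unit [:inverse (lead_coeff P):]" using lc0 is_unit_iff_degree[of "[:inverse (lead_coeff P):]"] by simp
    have "irreducible f" unfolding f_def using irreducible_mult_unit_left[OF u] True by simp
    moreover have "lead_coeff f = 1" unfolding f_def using lc0 by (simp add: lead_coeff_mult)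
    moreover have "f dvd P"
    proof -
      have "P = [:lead_coeff P:] * f" unfolding f_def using lc0 by simp
      then show ?thesis by (metis dvd_triv_right)
    qed
    moreover have "z \<in> Zr f" unfolding f_def Zr_mult using less.prems(2) by blast
    ultimately show ?thesis by blast
  next
    case False
    then obtain a b where ab: "P = a * b" "\<not> is_unit a" "\<not> is_unit b"
      using less.prems(1) nu False comm_semiring_1_class.irreducibleI[of P] by blast
    have a0: "a \<noteq> 0" "b \<noteq> 0" using ab less.prems(1) by auto
    have dega: "degree a < degree P" "degree b < degree P"
      using ab a0 by (auto simp: degree_mult_eq is_unit_iff_degree)
    have "z \<in> Zr a \<or> z \<in> Zr b" using less.prems(2) ab(1) Zr_mult by blast
    then show ?thesis
    proof
      assume "z \<in> Zr a"
      then obtain f where "lead_coeff f = 1 \<and> irreducible f \<and> f dvd a \<and> z \<in> Zr f"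
        using less.hyps[OF dega(1) a0(1)] by blast
      then show ?thesis using ab(1) by (meson dvd_mult2)
    next
      assume "z \<in> Zr b"
      then obtain f where "lead_coeff f = 1 \<and> irreducible f \<and> f dvd b \<and> z \<in> Zr f"
        using less.hyps[OF dega(2) a0(2)] by blast
      then show ?thesis using ab(1) by (meson dvd_mult)
    qed
  qed
qed

lemma pow_mod_eq:
  fixes z :: "'b::monoid_mult"
  assumes "z ^ m = 1" "[a = b] (mod m)"
  shows "z ^ a = z ^ b"
proof -
  have *: "z ^ c = z ^ (c mod m)" for c
  proof -
    have "z ^ c = z ^ (m * (c div m) + c mod m)" by simp
    also have "\<dots> = (z ^ m) ^ (c div m) * z ^ (c mod m)" by (simp only: power_add power_mult)
    finally show ?thesis using assms(1) by simp
  qed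
  show ?thesis using *[of a] *[of b] assms(2) unfolding cong_def by simp
qed

lemma Qpow_cong:
  fixes m Q :: nat
  assumes "coprime m Q" "[i = i'] (mod ord m Q)"
  shows "[Q ^ i = Q ^ i'] (mod m)"
proof -
  let ?o = "ord m Q"
  have o1: "[Q ^ ?o = 1] (mod m)" using ord_divides[of Q "ord m Q" m] by simp
  have *: "[Q ^ c = Q ^ (c mod ?o)] (mod m)" for c
  proof -
    have "Q ^ c = Q ^ (?o * (c div ?o) + c mod ?o)" by simp
    also have "\<dots> = (Q ^ ?o) ^ (c div ?o) * Q ^ (c mod ?o)" by (simp only: power_add power_mult)
    finally have "Q ^ c = (Q ^ ?o) ^ (c div ?o) * Q ^ (c mod ?o)" .
    moreover have "[(Q ^ ?o) ^ (c div ?o) * Q ^ (c mod ?o) = 1 ^ (c div ?o) * Q ^ (c mod ?o)] (mod m)"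
      by (rule cong_mult[OF cong_pow[OF o1] cong_refl])
    ultimately show ?thesis by simp
  qed
  have eq: "i mod ?o = i' mod ?o" using assms(2) unfolding cong_def .
  have "[Q ^ i = Q ^ (i' mod ?o)] (mod m)" using *[of i] eq by simp
  then show ?thesis by (rule cong_trans) (rule cong_sym[OF *[of i']])
qed

lemma forb_period:
  fixes z :: "'b::field"
  assumes "z \<in> urt m" "coprime m Q" "[i = i'] (mod ord m Q)"
  shows "z ^ (Q ^ i) = z ^ (Q ^ i')"
proof -
  have "z ^ m = 1" using assms(1) unfolding urt_def by simp
  then show ?thesis by (rule pow_mod_eq[OF _ Qpow_cong[OF assms(2,3)]])
qed

lemma forb_member:
  fixes z :: "'b::field"
  assumes z: "z \<in> urt m" and cop: "coprime m Q" and m: "m > 0" and y: "y \<in> forb Q z"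
  shows "forb Q y = forb Q z"
proof
  show "forb Q y \<subseteq> forb Q z"
  proof
    fix x assume "x \<in> forb Q y"
    then obtain j where "x = y ^ (Q ^ j)" unfolding forb_def by blast
    then show "x \<in> forb Q z" using forb_iter[OF y] by simp
  qed
next
  obtain t where t: "y = z ^ (Q ^ t)" using y unfolding forb_def by blast
  let ?o = "ord m Q"
  have o0: "?o > 0" using cop by (simp add: ord_gt_0_iff)
  have "[t * ?o = 0] (mod ?o)" by (simp add: cong_mult_self_right)
  then have "z ^ (Q ^ (t * ?o)) = z ^ (Q ^ 0)" by (rule forb_period[OF z cop])
  moreover have e: "t + (t * ?o - t) = t * ?o"
  proof -
    have "1 \<le> ?o" using o0 by linarith
    then have "t * 1 \<le> t * ?o" by (rule mult_le_mono2)
    then show ?thesis by simp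
  qed
  ultimately have "z = z ^ (Q ^ (t + (t * ?o - t)))" by (simp only: e power_0 power_one_right)
  also have "\<dots> = y ^ (Q ^ (t * ?o - t))" unfolding t by (simp add: power_add power_mult)
  finally have "z \<in> forb Q y" unfolding forb_def by (rule range_eqI)
  then show "forb Q z \<subseteq> forb Q y"
  proof -
    assume zy: "z \<in> forb Q y"
    show ?thesis
    proof
      fix x assume "x \<in> forb Q z"
      then obtain j where "x = z ^ (Q ^ j)" unfolding forb_def by blast
      then show "x \<in> forb Q y" using forb_iter[OF zy] by simp
    qed
  qed
qed

lemma forb_pow_image: "(\<lambda>y. y ^ a) ` forb Q z = forb Q ((z::'b::monoid_mult) ^ a)"
proof -
  have e: "(z ^ (Q ^ j)) ^ a = (z ^ a) ^ (Q ^ j)" for j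
    by (simp add: power_mult[symmetric] mult.commute)
  have "(\<lambda>y. y ^ a) ` range (\<lambda>j. z ^ (Q ^ j)) = range (\<lambda>j. (z ^ (Q ^ j)) ^ a)"
    by (rule image_image)
  also have "\<dots> = range (\<lambda>j. (z ^ a) ^ (Q ^ j))" by (simp only: e)
  finally show ?thesis unfolding forb_def .
qed

lemma urt_pow: "z \<in> urt (l1 * l2) \<Longrightarrow> z ^ l2 \<in> urt l1"
  unfolding urt_def by (simp add: power_mult[symmetric] mult.commute)

lemma decomp:
  fixes z :: "'b::field"
  assumes u: "[l2 * u = 1] (mod l1)" and v: "[l1 * v = 1] (mod l2)" and cop: "coprime l1 l2"
    and z: "z \<in> urt (l1 * l2)"
  shows "z = (z ^ l2) ^ u * (z ^ l1) ^ v"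
proof -
  have "[l2 * u + l1 * v = 1 + 0] (mod l1)"
    by (intro cong_add u) (simp add: cong_mult_self_left)
  moreover have "[l2 * u + l1 * v = 0 + 1] (mod l2)"
    by (intro cong_add v) (simp add: cong_mult_self_left)
  ultimately have "[l2 * u + l1 * v = 1] (mod l1 * l2)"
    using coprime_cong_mult_nat[OF _ _ cop] by simp
  then have "z ^ (l2 * u + l1 * v) = z ^ 1"
    using pow_mod_eq[of z "l1 * l2"] z unfolding urt_def by blast
  then show ?thesis by (simp add: power_add power_mult)
qed

locale orbsetting =
  fixes Q l1 l2 u v :: nat
  assumes cop12: "coprime l1 l2" and cop1: "coprime l1 Q" and cop2: "coprime l2 Q"
    and ordcop: "coprime (ord l1 Q) (ord l2 Q)" and l1: "l1 > 0" and l2: "l2 > 0"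
    and u: "[l2 * u = 1] (mod l1)" and v: "[l1 * v = 1] (mod l2)"
begin

lemma inj_core:
  fixes z z' :: "'b::field"
  assumes z: "z \<in> urt (l1 * l2)" and z': "z' \<in> urt (l1 * l2)"
    and e2: "forb Q (z' ^ l2) = forb Q (z ^ l2)" and e1: "forb Q (z' ^ l1) = forb Q (z ^ l1)"
  shows "forb Q z' = forb Q z"
proof -
  have "z' ^ l2 \<in> forb Q (z ^ l2)" using e2 forb_self[of "z' ^ l2" Q] by simp
  then obtain i where i: "z' ^ l2 = (z ^ l2) ^ (Q ^ i)" unfolding forb_def by blast
  have "z' ^ l1 \<in> forb Q (z ^ l1)" using e1 forb_self[of "z' ^ l1" Q] by simp
  then obtain j where j: "z' ^ l1 = (z ^ l1) ^ (Q ^ j)" unfolding forb_def by blast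
  obtain t where t: "[t = i] (mod ord l1 Q)" "[t = j] (mod ord l2 Q)"
    using binary_chinese_remainder_nat[OF ordcop] by blast
  define w where "w = z ^ (Q ^ t)"
  have zl2: "z ^ l2 \<in> urt l1" using urt_pow[OF z] .
  have zl1: "z ^ l1 \<in> urt l2" using urt_pow[of z l2 l1] z by (simp add: mult.commute)
  have w2: "w ^ l2 = z' ^ l2"
  proof -
    have "w ^ l2 = (z ^ l2) ^ (Q ^ t)" unfolding w_def by (simp add: power_mult[symmetric] mult.commute)
    also have "\<dots> = (z ^ l2) ^ (Q ^ i)" by (rule forb_period[OF zl2 cop1 t(1)])
    finally show ?thesis using i by simp
  qed
  have w1: "w ^ l1 = z' ^ l1"
  proof -
    have "w ^ l1 = (z ^ l1) ^ (Q ^ t)" unfolding w_def by (simp add: power_mult[symmetric] mult.commute)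
    also have "\<dots> = (z ^ l1) ^ (Q ^ j)" by (rule forb_period[OF zl1 cop2 t(2)])
    finally show ?thesis using j by simp
  qed
  have wu: "w \<in> urt (l1 * l2)" using forb_sub_urt[OF z] unfolding w_def forb_def by blast
  have "w = z'" using decomp[OF u v cop12 wu] decomp[OF u v cop12 z'] w1 w2 by simp
  then have "z' \<in> forb Q z" unfolding w_def forb_def by blast
  moreover have "coprime (l1 * l2) Q" using cop1 cop2 by simp
  ultimately show ?thesis using forb_member[OF z] l1 l2 by simp
qed

lemma card_orbits:
  "card (forb Q ` urt (l1 * l2) :: 'b::field set set) =
   card (forb Q ` urt l1 :: 'b set set) * card (forb Q ` urt l2 :: 'b set set)"
proof -
  define G :: "'b set \<Rightarrow> 'b set \<times> 'b set" where "G Ob = ((\<lambda>y. y ^ l2) ` Ob, (\<lambda>y. y ^ l1) ` Ob)" for Ob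
  have Gf: "G (forb Q z) = (forb Q (z ^ l2), forb Q (z ^ l1))" for z
    unfolding G_def forb_pow_image ..
  have "bij_betw G (forb Q ` urt (l1 * l2)) (forb Q ` urt l1 \<times> forb Q ` urt l2)"
  proof (rule bij_betw_imageI)
    show "inj_on G (forb Q ` urt (l1 * l2))"
    proof (rule inj_onI)
      fix A B assume "A \<in> forb Q ` urt (l1 * l2)" "B \<in> forb Q ` urt (l1 * l2)" "G A = G B"
      then obtain z z' where zz: "z \<in> urt (l1 * l2)" "z' \<in> urt (l1 * l2)" "A = forb Q z" "B = forb Q z'"
        "G (forb Q z) = G (forb Q z')" by blast
      then show "A = B" using inj_core[OF zz(1,2)] unfolding Gf by simp
    qed
  next
    show "G ` forb Q ` urt (l1 * l2) = forb Q ` urt l1 \<times> forb Q ` urt l2"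
    proof
      show "G ` forb Q ` urt (l1 * l2) \<subseteq> forb Q ` urt l1 \<times> forb Q ` urt l2"
      proof
        fix Xp :: "'b set \<times> 'b set" assume "Xp \<in> G ` forb Q ` urt (l1 * l2)"
        then obtain z where z: "z \<in> urt (l1 * l2)" "Xp = G (forb Q z)" by blast
        have "z ^ l2 \<in> urt l1" using urt_pow[OF z(1)] .
        moreover have "z ^ l1 \<in> urt l2" using urt_pow[of z l2 l1] z(1) by (simp add: mult.commute)
        ultimately show "Xp \<in> forb Q ` urt l1 \<times> forb Q ` urt l2" using z(2) Gf by simp
      qed
    next
      show "forb Q ` urt l1 \<times> forb Q ` urt l2 \<subseteq> G ` forb Q ` urt (l1 * l2)"
      proof
        fix Xp :: "'b set \<times> 'b set" assume "Xp \<in> forb Q ` urt l1 \<times> forb Q ` urt l2"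
        then obtain b c :: 'b where bc: "b \<in> urt l1" "c \<in> urt l2" "Xp = (forb Q b, forb Q c)" by blast
        define z where "z = b ^ u * c ^ v"
        have b1: "b ^ l1 = 1" and c1: "c ^ l2 = 1" using bc unfolding urt_def by auto
        have "z ^ (l1 * l2) = (b ^ l1) ^ (u * l2) * (c ^ l2) ^ (v * l1)"
          unfolding z_def by (simp add: power_mult_distrib flip: power_mult) (simp add: ac_simps)
        then have zu: "z \<in> urt (l1 * l2)" unfolding urt_def using b1 c1 by simp
        have "z ^ l2 = b ^ (l2 * u) * (c ^ l2) ^ v"
          unfolding z_def by (simp add: power_mult_distrib flip: power_mult) (simp add: ac_simps)
        also have "b ^ (l2 * u) = b ^ 1" by (rule pow_mod_eq[OF b1 u])
        finally have z2: "z ^ l2 = b" using c1 by simp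
        have "z ^ l1 = (b ^ l1) ^ u * c ^ (l1 * v)"
          unfolding z_def by (simp add: power_mult_distrib flip: power_mult) (simp add: ac_simps)
        also have "c ^ (l1 * v) = c ^ 1" by (rule pow_mod_eq[OF c1 v])
        finally have z1: "z ^ l1 = c" using b1 by simp
        have "Xp = G (forb Q z)" using Gf z1 z2 bc(3) by simp
        then show "Xp \<in> G ` forb Q ` urt (l1 * l2)" using zu by blast
      qed
    qed
  qed
  then show ?thesis by (simp add: bij_betw_same_card card_cartesian_product)
qed

end

lemma map_poly_to_ac_reflect: "map_poly to_ac (reflect_poly f) = reflect_poly (map_poly to_ac (f :: 'a::field poly))"
proof -
  have d: "degree (map_poly to_ac f) = degree f" by (rule degree_map_poly) simp
  show ?thesis by (rule poly_eqI) (simp add: coeff_reflect_poly coeff_map_poly d)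
qed

lemma map_poly_to_ac_smult: "map_poly to_ac (Polynomial.smult c f) = Polynomial.smult (to_ac c) (map_poly to_ac (f :: 'a::field poly))"
  by (rule poly_eqI) (simp add: coeff_map_poly)

lemma Zr_coeff0: "Polynomial.coeff f 0 \<noteq> 0 \<Longrightarrow> y \<in> Zr f \<Longrightarrow> y \<noteq> 0"
  unfolding Zr_def by (auto simp: poly_0_coeff_0 coeff_map_poly)

lemma dagger_root:
  fixes f :: "'a::{field,finite} poly"
  assumes hq: "q = CHAR('a) ^ k" and c0: "Polynomial.coeff f 0 \<noteq> 0" and y: "y \<in> Zr f"
  shows "(inverse y) ^ q \<in> Zr (dagger_poly q f)"
proof -
  have y0: "y \<noteq> 0" by (rule Zr_coeff0[OF c0 y])
  have q0: "q > 0" using hq prime_CHAR_finite prime_gt_0_nat by auto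
  define R where "R = recip_poly f"
  have "poly (map_poly to_ac R) (inverse y) =
        to_ac (inverse (Polynomial.coeff f 0)) * ((inverse y) ^ degree (map_poly to_ac f) * poly (map_poly to_ac f) y)"
    unfolding R_def recip_poly_def map_poly_to_ac_smult map_poly_to_ac_reflect
    using y0 by (simp add: poly_reflect_poly_nz)
  then have R0: "poly (map_poly to_ac R) (inverse y) = 0" using y unfolding Zr_def by simp
  have "map_poly to_ac (dagger_poly q f) = map_poly (\<lambda>c. c ^ q) (map_poly to_ac R)"
    unfolding dagger_poly_def conj_poly_def R_def
    by (rule poly_eqI) (simp add: coeff_map_poly q0)
  moreover have "poly (map_poly (\<lambda>c. c ^ q) (map_poly to_ac R)) ((inverse y) ^ q) = (poly (map_poly to_ac R) (inverse y)) ^ q"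
    by (rule poly_frob[OF CHAR_ac_prime]) (simp add: hq)
  ultimately show ?thesis using R0 q0 unfolding Zr_def by simp
qed

lemma dagger_monic:
  fixes f :: "'a::field poly"
  assumes c0: "Polynomial.coeff f 0 \<noteq> 0" and q0: "q > 0"
  shows "lead_coeff (dagger_poly q f) = 1 \<and> degree (dagger_poly q f) = degree f"
proof -
  define R where "R = recip_poly f"
  have dR: "degree R = degree f" unfolding R_def recip_poly_def using c0 by simp
  have lR: "lead_coeff R = 1" unfolding R_def recip_poly_def using c0 dR
    by (simp add: coeff_reflect_poly)
  have dD: "degree (dagger_poly q f) = degree R"
    unfolding dagger_poly_def conj_poly_def R_def[symmetric] by (rule degree_map_poly) simp
  have "lead_coeff (dagger_poly q f) = lead_coeff R ^ q"
    unfolding dD unfolding dagger_poly_def conj_poly_def R_def[symmetric] using q0 by (simp add: coeff_map_poly)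
  then show ?thesis using lR dD dR by simp
qed

lemma monic_dvd_eq:
  fixes f g :: "'a::field poly"
  assumes lf: "lead_coeff f = 1" and lg: "lead_coeff g = 1" and dg: "degree g \<le> degree f" and dv: "f dvd g"
  shows "f = g"
proof -
  obtain k where k: "g = f * k" using dv by (elim dvdE)
  have g0: "g \<noteq> 0" using lg by auto
  have k0: "k \<noteq> 0" "f \<noteq> 0" using k g0 by auto
  have "degree g = degree f + degree k" using k k0 by (simp add: degree_mult_eq)
  then have dk: "degree k = 0" using dg by simp
  have "lead_coeff g = lead_coeff f * lead_coeff k" using k by (simp add: lead_coeff_mult)
  then have lk: "Polynomial.coeff k 0 = 1" using lf lg dk by simp
  have "k = 1"
  proof (rule poly_eqI)
    fix n show "Polynomial.coeff k n = Polynomial.coeff 1 n"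
    proof (cases "n = 0")
      case True then show ?thesis using lk by simp
    next
      case False then show ?thesis using dk by (simp add: coeff_eq_0)
    qed
  qed
  then show ?thesis using k by simp
qed

lemma coeff0_of_dvd_xm1:
  fixes f :: "'a::field poly"
  assumes "f dvd [:0, 1:] ^ m - 1" "m > 0"
  shows "Polynomial.coeff f 0 \<noteq> 0"
proof
  assume c: "Polynomial.coeff f 0 = 0"
  obtain k where k: "[:0, 1:] ^ m - 1 = f * k" using assms(1) by (elim dvdE)
  have "poly ([:0, 1:] ^ m - 1) 0 = poly f 0 * poly k 0" using k by simp
  then show False using c assms(2) by (simp add: poly_0_coeff_0 coeff_0_power zero_power)
qed

lemma Aset_dvd: "f \<in> Aset m \<Longrightarrow> Zr f \<subseteq> urt m"
  unfolding Aset_def using Zr_dvd Zr_xm1 by blast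

lemma card_Aset:
  assumes hQ: "CARD('a::{field,finite}) = CHAR('a) ^ r" and m: "m > 0"
  shows "card (Aset m :: 'a poly set) = card (forb CARD('a) ` urt m :: 'a alg_closure set set)"
proof -
  let ?Q = "CARD('a)"
  have orb: "Zr f = forb ?Q z" if "f \<in> Aset m" "z \<in> Zr f" for f :: "'a poly" and z
    using Zr_is_orbit[OF hQ _ that(2) _ m] that Aset_dvd unfolding Aset_def by blast
  have ne: "\<exists>z. z \<in> Zr f" if "f \<in> Aset m" for f :: "'a poly"
    using Zr_nonempty irreducible_degree_pos that unfolding Aset_def by blast
  have "bij_betw Zr (Aset m :: 'a poly set) (forb ?Q ` urt m)"
  proof (rule bij_betw_imageI)
    show "inj_on Zr (Aset m :: 'a poly set)"
    proof (rule inj_onI)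
      fix f g :: "'a poly" assume f: "f \<in> Aset m" and g: "g \<in> Aset m" and e: "Zr f = Zr g"
      obtain z where z: "z \<in> Zr f" using ne[OF f] by blast
      have fg: "f dvd g" using common_root_dvd[of f z g] f z e unfolding Aset_def by auto
      have gf: "g dvd f" using common_root_dvd[of g z f] g z e unfolding Aset_def by auto
      have f0: "f \<noteq> 0" using f unfolding Aset_def by auto
      have "degree g \<le> degree f" using dvd_imp_degree_le[OF gf f0] .
      then show "f = g" using monic_dvd_eq[OF _ _ _ fg] f g unfolding Aset_def by auto
    qed
  next
    show "Zr ` (Aset m :: 'a poly set) = forb ?Q ` urt m"
    proof
      show "Zr ` (Aset m :: 'a poly set) \<subseteq> forb ?Q ` urt m"
      proof
        fix Xs assume "Xs \<in> Zr ` (Aset m :: 'a poly set)"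
        then obtain f where f: "f \<in> Aset m" "Xs = Zr f" by blast
        obtain z where z: "z \<in> Zr f" using ne[OF f(1)] by blast
        have "z \<in> urt m" using Aset_dvd[OF f(1)] z by blast
        then show "Xs \<in> forb ?Q ` urt m" using orb[OF f(1) z] f(2) by blast
      qed
    next
      show "forb ?Q ` urt m \<subseteq> Zr ` (Aset m :: 'a poly set)"
      proof
        fix Xs :: "'a alg_closure set" assume "Xs \<in> forb ?Q ` urt m"
        then obtain z where z: "z \<in> urt m" "Xs = forb ?Q z" by blast
        have P0: "([:0, 1:] ^ m - 1 :: 'a poly) \<noteq> 0"
        proof
          assume "([:0, 1:] ^ m - 1 :: 'a poly) = 0"
          then have "poly ([:0, 1:] ^ m - 1 :: 'a poly) 0 = 0" by simp
          then show False using m by (simp add: zero_power)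
        qed
        have "z \<in> Zr ([:0, 1:] ^ m - 1 :: 'a poly)" using z(1) Zr_xm1 by blast
        then obtain f :: "'a poly" where f: "lead_coeff f = 1" "irreducible f" "f dvd [:0, 1:] ^ m - 1" "z \<in> Zr f"
          using root_has_factor[OF P0] by blast
        have fA: "f \<in> Aset m" using f unfolding Aset_def by blast
        then show "Xs \<in> Zr ` (Aset m :: 'a poly set)" using orb[OF fA f(4)] z(2) by blast
      qed
    qed
  qed
  then show ?thesis by (rule bij_betw_same_card)
qed

lemma cj_pow: "((inverse (z::'b::field)) ^ q) ^ m = (inverse (z ^ m)) ^ q"
proof -
  have "((inverse z) ^ q) ^ m = (inverse z) ^ (q * m)" by (rule power_mult[symmetric])
  also have "\<dots> = ((inverse z) ^ m) ^ q" by (simp only: mult.commute[of q m] power_mult)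
  also have "(inverse z) ^ m = inverse (z ^ m)" by (rule power_inverse)
  finally show ?thesis .
qed

lemma xm1_nonzero: "m > 0 \<Longrightarrow> ([:0, 1:] ^ m - 1 :: 'a::field poly) \<noteq> 0"
proof
  assume m: "m > 0" and "([:0, 1:] ^ m - 1 :: 'a poly) = 0"
  then have "poly ([:0, 1:] ^ m - 1 :: 'a poly) 0 = 0" by simp
  then show False using m by (simp add: zero_power)
qed

lemma clos_prime:
  fixes q m :: nat
  assumes hQ: "CARD('a::{field,finite}) = CHAR('a) ^ r" and hq: "q = CHAR('a) ^ k" and m: "m > 0"
    and all: "\<forall>f :: 'a poly. lead_coeff f = 1 \<and> irreducible f \<and> f dvd ([:0, 1:] ^ m - 1) \<longrightarrow> SCRIM q f"
    and b: "(b :: 'a alg_closure) \<in> urt m"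
  shows "(inverse b) ^ q \<in> forb CARD('a) b"
proof -
  have "b \<in> Zr ([:0, 1:] ^ m - 1 :: 'a poly)" using b Zr_xm1 by blast
  then obtain f :: "'a poly" where f: "lead_coeff f = 1" "irreducible f" "f dvd [:0, 1:] ^ m - 1" "b \<in> Zr f"
    using root_has_factor[OF xm1_nonzero[OF m]] by blast
  have sc: "SCRIM q f" using all f by blast
  then have fd: "dagger_poly q f = f" unfolding SCRIM_def by simp
  have c0: "Polynomial.coeff f 0 \<noteq> 0" by (rule coeff0_of_dvd_xm1[OF f(3) m])
  have "(inverse b) ^ q \<in> Zr f" using dagger_root[OF hq c0 f(4)] fd by simp
  moreover have "Zr f = forb CARD('a) b" by (rule Zr_is_orbit[OF hQ f(2) f(4) b m])
  ultimately show ?thesis by simp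
qed

context orbsetting
begin

lemma clos_n:
  fixes z :: "'b::field"
  assumes c1: "\<And>b :: 'b. b \<in> urt l1 \<Longrightarrow> (inverse b) ^ q \<in> forb Q b"
    and c2: "\<And>b :: 'b. b \<in> urt l2 \<Longrightarrow> (inverse b) ^ q \<in> forb Q b"
    and z: "z \<in> urt (l1 * l2)"
  shows "(inverse z) ^ q \<in> forb Q z"
proof -
  define w where "w = (inverse z) ^ q"
  have wu: "w \<in> urt (l1 * l2)" using z unfolding w_def urt_def by (simp add: cj_pow)
  have zl2: "z ^ l2 \<in> urt l1" using urt_pow[OF z] .
  have zl1: "z ^ l1 \<in> urt l2" using urt_pow[of z l2 l1] z by (simp add: mult.commute)
  have "w ^ l2 = (inverse (z ^ l2)) ^ q" unfolding w_def by (rule cj_pow)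
  then have "w ^ l2 \<in> forb Q (z ^ l2)" using c1[OF zl2] by simp
  then have e2: "forb Q (w ^ l2) = forb Q (z ^ l2)" by (rule forb_member[OF zl2 cop1 l1])
  have "w ^ l1 = (inverse (z ^ l1)) ^ q" unfolding w_def by (rule cj_pow)
  then have "w ^ l1 \<in> forb Q (z ^ l1)" using c2[OF zl1] by simp
  then have e1: "forb Q (w ^ l1) = forb Q (z ^ l1)" by (rule forb_member[OF zl1 cop2 l2])
  have "forb Q w = forb Q z" by (rule inj_core[OF z wu e2 e1])
  then show ?thesis using forb_self[of w Q] unfolding w_def by simp
qed

end

theorem corollary2p13:
  fixes q l1 l2 :: nat
  assumes card_field: "card (UNIV :: 'a::{field,finite} set) = q ^ 2"
    and q_pp: "\<exists>p k. prime p \<and> k > 0 \<and> q = p ^ k"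
    and l1: "prime l1" "odd l1" "coprime l1 q"
    and l2: "prime l2" "odd l2" "coprime l2 q"
    and dist: "l1 \<noteq> l2"
    and all1: "\<forall>f :: 'a poly. lead_coeff f = 1 \<and> irreducible f \<and> f dvd ([:0, 1:] ^ l1 - 1) \<longrightarrow> SCRIM q f"
    and all2: "\<forall>f :: 'a poly. lead_coeff f = 1 \<and> irreducible f \<and> f dvd ([:0, 1:] ^ l2 - 1) \<longrightarrow> SCRIM q f"
    and ordgcd: "gcd (ord l1 (q ^ 2)) (ord l2 (q ^ 2)) = 1"
  shows "card (Omega q (l1 * l2) :: 'a poly set) =
         card (Omega q l1 :: 'a poly set) * card (Omega q l2 :: 'a poly set)"
proof -
  obtain p k where pk: "prime p" "k > 0" "q = p ^ k" using q_pp by blast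
  have pC: "prime CHAR('a)" by (rule prime_CHAR_finite)
  have qq: "q ^ 2 = p ^ (k * 2)" using pk(3) by (simp add: power_mult)
  have "CHAR('a) dvd p ^ (k * 2)" using CHAR_dvd_CARD[where 'a='a] card_field qq by simp
  then have "CHAR('a) dvd p" using pC prime_dvd_power by blast
  then have Cp: "CHAR('a) = p" using pk(1) pC primes_dvd_imp_eq by blast
  have hQ: "CARD('a) = CHAR('a) ^ (k * 2)" using card_field qq Cp by simp
  have hq: "q = CHAR('a) ^ k" using pk(3) Cp by simp
  have q0: "q > 0" using hq pC prime_gt_0_nat by simp
  have l1p: "l1 > 0" using l1(1) prime_gt_0_nat by blast
  have l2p: "l2 > 0" using l2(1) prime_gt_0_nat by blast
  have np: "l1 * l2 > 0" using l1p l2p by simp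
  have cop12: "coprime l1 l2" by (rule primes_coprime[OF l1(1) l2(1) dist])
  have cop1: "coprime l1 (q ^ 2)" using l1(3) by simp
  have cop2: "coprime l2 (q ^ 2)" using l2(3) by simp
  have copn: "coprime (l1 * l2) (q ^ 2)" using cop1 cop2 by simp
  have ordcop: "coprime (ord l1 (q ^ 2)) (ord l2 (q ^ 2))" using ordgcd by (simp add: coprime_iff_gcd_eq_1)
  obtain u where u: "[l2 * u = 1] (mod l1)"
    using cong_solve_coprime_nat[of l2 l1] cop12 by (auto simp: coprime_commute)
  obtain v where v: "[l1 * v = 1] (mod l2)"
    using cong_solve_coprime_nat[of l1 l2] cop12 by auto
  interpret os: orbsetting "q ^ 2" l1 l2 u v
    by unfold_locales (use cop12 cop1 cop2 ordcop l1p l2p u v in auto)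
  have QC: "CARD('a) = q ^ 2" by (rule card_field)

  have OmA: "Omega q m = (Aset m :: 'a poly set)" if allm: "\<forall>f :: 'a poly. lead_coeff f = 1 \<and> irreducible f \<and> f dvd ([:0, 1:] ^ m - 1) \<longrightarrow> SCRIM q f" for m
  proof -
    have sb: "SCRIM q f \<Longrightarrow> lead_coeff f = 1 \<and> irreducible f" for f :: "'a poly"
      by (simp add: SCRIM_def)
    show ?thesis unfolding Omega_def Aset_def using allm sb by blast
  qed
  have Om1: "Omega q l1 = (Aset l1 :: 'a poly set)" by (rule OmA[OF all1])
  have Om2: "Omega q l2 = (Aset l2 :: 'a poly set)" by (rule OmA[OF all2])

  have clos1: "(inverse b) ^ q \<in> forb (q ^ 2) b" if "b \<in> urt l1" for b :: "'a alg_closure"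
    using clos_prime[OF hQ hq l1p all1 that] QC by simp
  have clos2: "(inverse b) ^ q \<in> forb (q ^ 2) b" if "b \<in> urt l2" for b :: "'a alg_closure"
    using clos_prime[OF hQ hq l2p all2 that] QC by simp
  have closn: "(inverse z) ^ q \<in> forb (q ^ 2) z" if "z \<in> urt (l1 * l2)" for z :: "'a alg_closure"
    by (rule os.clos_n[OF clos1 clos2 that])

  have scrim: "SCRIM q h" if hA: "h \<in> (Aset (l1 * l2) :: 'a poly set)" for h
  proof -
    have h: "lead_coeff h = 1" "irreducible h" "h dvd [:0, 1:] ^ (l1 * l2) - 1"
      using hA unfolding Aset_def by auto
    have c0: "Polynomial.coeff h 0 \<noteq> 0" by (rule coeff0_of_dvd_xm1[OF h(3) np])
    have dm: "lead_coeff (dagger_poly q h) = 1" "degree (dagger_poly q h) = degree h"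
      using dagger_monic[OF c0 q0] by auto
    obtain z where z: "z \<in> Zr h" using Zr_nonempty[OF irreducible_degree_pos[OF h(2)]] by blast
    have zu: "z \<in> urt (l1 * l2)" using Aset_dvd[OF hA] z by blast
    have Zh: "Zr h = forb (q ^ 2) z" using Zr_is_orbit[OF hQ h(2) z zu np] QC by simp
    let ?cj = "\<lambda>y :: 'a alg_closure. (inverse y) ^ q"
    have fin: "finite (forb (q ^ 2) z)"
      using finite_subset[OF forb_sub_urt[OF zu] finite_urt[OF np]] .
    have sub: "?cj ` forb (q ^ 2) z \<subseteq> forb (q ^ 2) z"
    proof
      fix x assume "x \<in> ?cj ` forb (q ^ 2) z"
      then obtain y where y: "y \<in> forb (q ^ 2) z" "x = ?cj y" by blast
      have yu: "y \<in> urt (l1 * l2)" using forb_sub_urt[OF zu] y(1) by blast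
      have "forb (q ^ 2) y = forb (q ^ 2) z" by (rule forb_member[OF zu copn np y(1)])
      then show "x \<in> forb (q ^ 2) z" using closn[OF yu] y(2) by simp
    qed
    have inj: "inj_on ?cj (forb (q ^ 2) z)"
    proof (rule inj_onI)
      fix a b :: "'a alg_closure" assume "?cj a = ?cj b"
      then have "inverse a = inverse b"
        using frob_inj[where m=q and k=k and y="inverse a" and z="inverse b"] CHAR_ac_prime[where 'a='a] hq
        by simp
      then show "a = b" by simp
    qed
    have "?cj ` forb (q ^ 2) z = forb (q ^ 2) z" by (rule endo_inj_surj[OF fin sub inj])
    then obtain w where w: "w \<in> forb (q ^ 2) z" "z = ?cj w" using forb_self[of z "q ^ 2"] by blast
    have "z \<in> Zr (dagger_poly q h)" using dagger_root[OF hq c0, of w] w Zh by simp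
    then have "h dvd dagger_poly q h" using common_root_dvd[OF h(2) z] by blast
    then have "h = dagger_poly q h" using monic_dvd_eq[OF h(1) dm(1)] dm(2) by simp
    then show ?thesis unfolding SCRIM_def using h c0 by simp
  qed
  have Omn: "Omega q (l1 * l2) = (Aset (l1 * l2) :: 'a poly set)"
  proof
    have sb: "SCRIM q f \<Longrightarrow> lead_coeff f = 1 \<and> irreducible f" for f :: "'a poly"
      by (simp add: SCRIM_def)
    show "Omega q (l1 * l2) \<subseteq> (Aset (l1 * l2) :: 'a poly set)"
      unfolding Omega_def Aset_def using sb by blast
    show "(Aset (l1 * l2) :: 'a poly set) \<subseteq> Omega q (l1 * l2)"
      using scrim unfolding Omega_def Aset_def by blast
  qed
  have cA: "card (Aset m :: 'a poly set) = card (forb (q ^ 2) ` urt m :: 'a alg_closure set set)" if "m > 0" for m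
    using card_Aset[OF hQ that] QC by simp
  have "card (Omega q (l1 * l2) :: 'a poly set) = card (forb (q ^ 2) ` urt (l1 * l2) :: 'a alg_closure set set)"
    using Omn cA[OF np] by simp
  also have "\<dots> = card (forb (q ^ 2) ` urt l1 :: 'a alg_closure set set) * card (forb (q ^ 2) ` urt l2 :: 'a alg_closure set set)"
    by (rule os.card_orbits)
  also have "\<dots> = card (Omega q l1 :: 'a poly set) * card (Omega q l2 :: 'a poly set)"
    using Om1 Om2 cA[OF l1p] cA[OF l2p] by simp
  finally show ?thesis .
qed

end
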